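(* Let $\{\mathcal G,(\Gamma_0,\Gamma_1),(\widetilde\Gamma_0,\widetilde\Gamma_1)\}$ be a triple for the adjoint pair $\{S,\widetilde S\}$ such that $\rho(A_0)$ and $\rho(\widetilde A_0)$ are nonempty, and let $M,\widetilde M$ be the associated Weyl functions. Let $B_1,B_2,\widetilde B_1,\widetilde B_2$ be linear operators in $\mathcal G$. Then for all $\lambda\in\rho(A_0)$ and $\mu\in\rho(\widetilde A_0)$: (i) $\lambda\in\sigma_p(A_{B_1B_2})$ if and only if $\ker(I-B_2M(\lambda)B_1)\neq\{0\}$, and in this case $\ker(A_{B_1B_2}-\lambda)=\{f_\lambda\in\ker(T-\lambda):\Gamma_0f_\lambda=B_1\varphi \text{ for some }\varphi\in\ker(I-B_2M(\lambda)B_1)\}$; (ii) $\mu\in\sigma_p(\widetilde A_{\widetilde B_1\widetilde B_2})$ if and only if $\ker(I-\widetilde B_2\widetilde M(\mu)\widetilde B_1)\neq\{0\}$, and in this case $\ker(\widetilde A_{\widetilde B_1\widetilde B_2}-\mu)=\{g_\mu\in\ker(\widetilde T-\mu):\widetilde\Gamma_0g_\mu=\widetilde B_1\psi\text{ for some }\psi\in\ker(I-\widetilde B_2\widetilde M(\mu)\widetilde B_1)\}$.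
   Context: Let $\mathfrak H$ be a separable Hilbert space. An adjoint pair $\{S,\widetilde S\}$ consists of densely defined closed operators $S,\widetilde S$ in $\mathfrak H$ with $(Sf,g)=(f,\widetilde Sg)$ for all $f\in\operatorname{dom}S$, $g\in\operatorname{dom}\widetilde S$. Fix operators $T\subset S^*$ and $\widetilde T\subset\widetilde S^*$ which are cores, i.e. $\overline T=S^*$ and $\overline{\widetilde T}=\widetilde S^*$. A triple $\{\mathcal G,(\Gamma_0,\Gamma_1),(\widetilde\Gamma_0,\widetilde\Gamma_1)\}$ for $\{S,\widetilde S\}$ consists of a Hilbert space $\mathcal G$ and linear maps $\Gamma_0,\Gamma_1:\operatorname{dom}T\to\mathcal G$, $\widetilde\Gamma_0,\widetilde\Gamma_1:\operatorname{dom}\widetilde T\to\mathcal G$. Put $A_0:=T\upharpoonright\ker\Gamma_0$ and $\widetilde A_0:=\widetilde T\upharpoonright\ker\widetilde\Gamma_0$. For $\lambda\in\rho(A_0)$ one has $\operatorname{dom}T=\ker\Gamma_0\dotplus\ker(T-\lambda)$, so $\Gamma_0\upharpoonright\ker(T-\lambda)$ is injective; similarly for $\widetilde T$. The $\gamma$-fields are $\gamma(\lambda):=(\Gamma_0\upharpoonright\ker(T-\lambda))^{-1}$, $\widetilde\gamma(\mu):=(\widetilde\Gamma_0\upharpoonright\ker(\widetilde T-\mu))^{-1}$; the Weyl functions are $M(\lambda):=\Gamma_1\gamma(\lambda)$, $\lambda\in\rho(A_0)$, and $\widetilde M(\mu):=\widetilde\Gamma_1\widetilde\gamma(\mu)$,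 $\mu\in\rho(\widetilde A_0)$. Products of (possibly unbounded, non-densely defined) operators have their natural domains, e.g. $\operatorname{dom}(B_1B_2)=\{\varphi\in\operatorname{dom}B_2:B_2\varphi\in\operatorname{dom}B_1\}$. Define $A_{B_1B_2}f:=Tf$ on $\operatorname{dom}A_{B_1B_2}:=\{f\in\operatorname{dom}T:\Gamma_1f\in\operatorname{dom}(B_1B_2),\ B_1B_2\Gamma_1f=\Gamma_0f\}$ and $\widetilde A_{\widetilde B_1\widetilde B_2}g:=\widetilde Tg$ on $\operatorname{dom}\widetilde A_{\widetilde B_1\widetilde B_2}:=\{g\in\operatorname{dom}\widetilde T:\widetilde\Gamma_1g\in\operatorname{dom}(\widetilde B_1\widetilde B_2),\ \widetilde B_1\widetilde B_2\widetilde\Gamma_1g=\widetilde\Gamma_0g\}$. $\sigma_p$ denotes the set of eigenvalues. *)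

theory Defs
  imports Complex_Main "HOL-Library.Countable_Set"
begin

text \<open>Complex vector spaces / Hilbert spaces are given explicitly by a scalar
multiplication sc :: complex => 'a => 'a and an inner product ip :: 'a => 'a => complex
(linear in the first argument, conjugate linear in the second).\<close>

definition is_subspace :: "(complex \<Rightarrow> 'a \<Rightarrow> 'a) \<Rightarrow> ('a::ab_group_add) set \<Rightarrow> bool" where
  "is_subspace sc D \<longleftrightarrow> 0 \<in> D \<and> (\<forall>x\<in>D. \<forall>y\<in>D. x + y \<in> D) \<and> (\<forall>c. \<forall>x\<in>D. sc c x \<in> D)"

definition linear_on :: "(complex \<Rightarrow> 'a \<Rightarrow> 'a) \<Rightarrow> (complex \<Rightarrow> 'b \<Rightarrow> 'b) \<Rightarrow> ('a::ab_group_add) set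
    \<Rightarrow> ('a \<Rightarrow> 'b::ab_group_add) \<Rightarrow> bool" where
  "linear_on sc1 sc2 D f \<longleftrightarrow> is_subspace sc1 D \<and> (\<forall>x\<in>D. \<forall>y\<in>D. f (x + y) = f x + f y)
     \<and> (\<forall>c. \<forall>x\<in>D. f (sc1 c x) = sc2 c (f x))"

type_synonym ('a, 'b) lop = "'a set \<times> ('a \<Rightarrow> 'b)"

definition lin_op :: "(complex \<Rightarrow> 'a \<Rightarrow> 'a) \<Rightarrow> (complex \<Rightarrow> 'b \<Rightarrow> 'b) \<Rightarrow> ('a::ab_group_add, 'b::ab_group_add) lop \<Rightarrow> bool" where
  "lin_op sc1 sc2 A \<longleftrightarrow> linear_on sc1 sc2 (fst A) (snd A)"

definition complex_inner_space :: "(complex \<Rightarrow> 'a \<Rightarrow> 'a) \<Rightarrow> ('a::ab_group_add \<Rightarrow> 'a \<Rightarrow> complex) \<Rightarrow> bool" where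
  "complex_inner_space sc ip \<longleftrightarrow> vector_space sc
     \<and> (\<forall>x y. ip x y = cnj (ip y x))
     \<and> (\<forall>x y z. ip (x + y) z = ip x z + ip y z)
     \<and> (\<forall>c x y. ip (sc c x) y = c * ip x y)
     \<and> (\<forall>x. 0 \<le> Re (ip x x))
     \<and> (\<forall>x. ip x x = 0 \<longrightarrow> x = 0)"

definition hnorm :: "('a::ab_group_add \<Rightarrow> 'a \<Rightarrow> complex) \<Rightarrow> 'a \<Rightarrow> real" where
  "hnorm ip x = sqrt (Re (ip x x))"

definition hconv :: "('a::ab_group_add \<Rightarrow> 'a \<Rightarrow> complex) \<Rightarrow> (nat \<Rightarrow> 'a) \<Rightarrow> 'a \<Rightarrow> bool" where
  "hconv ip X x \<longleftrightarrow> (\<lambda>n. hnorm ip (X n - x)) \<longlonglongrightarrow> 0"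

definition hilbert_space :: "(complex \<Rightarrow> 'a \<Rightarrow> 'a) \<Rightarrow> ('a::ab_group_add \<Rightarrow> 'a \<Rightarrow> complex) \<Rightarrow> bool" where
  "hilbert_space sc ip \<longleftrightarrow> complex_inner_space sc ip
     \<and> (\<forall>X. (\<forall>e>0. \<exists>N. \<forall>m\<ge>N. \<forall>n\<ge>N. hnorm ip (X m - X n) < e) \<longrightarrow> (\<exists>x. hconv ip X x))"

definition separable :: "('a::ab_group_add \<Rightarrow> 'a \<Rightarrow> complex) \<Rightarrow> bool" where
  "separable ip \<longleftrightarrow> (\<exists>D. countable D \<and> (\<forall>x. \<forall>e>0. \<exists>d\<in>D. hnorm ip (x - d) < e))"

definition densely_defined :: "('a::ab_group_add \<Rightarrow> 'a \<Rightarrow> complex) \<Rightarrow> ('a, 'b) lop \<Rightarrow> bool" where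
  "densely_defined ip A \<longleftrightarrow> (\<forall>x. \<forall>e>0. \<exists>d\<in>fst A. hnorm ip (x - d) < e)"

definition graph :: "('a, 'b) lop \<Rightarrow> ('a \<times> 'b) set" where
  "graph A = {(x, snd A x) | x. x \<in> fst A}"

definition closed_op :: "('a::ab_group_add \<Rightarrow> 'a \<Rightarrow> complex) \<Rightarrow> ('a, 'a) lop \<Rightarrow> bool" where
  "closed_op ip A \<longleftrightarrow> (\<forall>X x y. (\<forall>n. X n \<in> fst A) \<and> hconv ip X x \<and> hconv ip (\<lambda>n. snd A (X n)) y
       \<longrightarrow> x \<in> fst A \<and> snd A x = y)"

definition adjoint_graph :: "('a::ab_group_add \<Rightarrow> 'a \<Rightarrow> complex) \<Rightarrow> ('a, 'a) lop \<Rightarrow> ('a \<times> 'a) set" where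
  "adjoint_graph ip S = {(g, h). \<forall>f\<in>fst S. ip (snd S f) g = ip f h}"

definition graph_closure :: "('a::ab_group_add \<Rightarrow> 'a \<Rightarrow> complex) \<Rightarrow> ('a \<times> 'a) set \<Rightarrow> ('a \<times> 'a) set" where
  "graph_closure ip G = {(x, y). \<exists>X Y. (\<forall>n. (X n, Y n) \<in> G) \<and> hconv ip X x \<and> hconv ip Y y}"

definition adjoint_pair :: "(complex \<Rightarrow> 'a \<Rightarrow> 'a) \<Rightarrow> ('a::ab_group_add \<Rightarrow> 'a \<Rightarrow> complex)
    \<Rightarrow> ('a, 'a) lop \<Rightarrow> ('a, 'a) lop \<Rightarrow> bool" where
  "adjoint_pair sc ip S St \<longleftrightarrow> lin_op sc sc S \<and> lin_op sc sc St
     \<and> densely_defined ip S \<and> densely_defined ip St \<and> closed_op ip S \<and> closed_op ip St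
     \<and> (\<forall>f\<in>fst S. \<forall>g\<in>fst St. ip (snd S f) g = ip f (snd St g))"

definition core_of_adjoint :: "('a::ab_group_add \<Rightarrow> 'a \<Rightarrow> complex) \<Rightarrow> ('a, 'a) lop \<Rightarrow> ('a, 'a) lop \<Rightarrow> bool" where
  "core_of_adjoint ip T S \<longleftrightarrow> graph T \<subseteq> adjoint_graph ip S
     \<and> graph_closure ip (graph T) = adjoint_graph ip S"

definition restrict_op :: "('a, 'b) lop \<Rightarrow> 'a set \<Rightarrow> ('a, 'b) lop" where
  "restrict_op A D = (fst A \<inter> D, snd A)"

definition ker_shift :: "(complex \<Rightarrow> 'a \<Rightarrow> 'a) \<Rightarrow> ('a::ab_group_add, 'a) lop \<Rightarrow> complex \<Rightarrow> 'a set" where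
  "ker_shift sc A lam = {x \<in> fst A. snd A x - sc lam x = 0}"

definition point_spectrum :: "(complex \<Rightarrow> 'a \<Rightarrow> 'a) \<Rightarrow> ('a::ab_group_add, 'a) lop \<Rightarrow> complex set" where
  "point_spectrum sc A = {lam. \<exists>x\<in>fst A. x \<noteq> 0 \<and> snd A x = sc lam x}"

definition resolvent_set :: "(complex \<Rightarrow> 'a \<Rightarrow> 'a) \<Rightarrow> ('a::ab_group_add \<Rightarrow> 'a \<Rightarrow> complex)
    \<Rightarrow> ('a, 'a) lop \<Rightarrow> complex set" where
  "resolvent_set sc ip A = {lam. bij_betw (\<lambda>x. snd A x - sc lam x) (fst A) UNIV
      \<and> (\<exists>C. \<forall>x\<in>fst A. hnorm ip x \<le> C * hnorm ip (snd A x - sc lam x))}"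

definition gamma_field :: "(complex \<Rightarrow> 'a \<Rightarrow> 'a) \<Rightarrow> ('a::ab_group_add, 'a) lop \<Rightarrow> ('a \<Rightarrow> 'b)
    \<Rightarrow> complex \<Rightarrow> ('b, 'a) lop" where
  "gamma_field sc T G0 lam = (G0 ` ker_shift sc T lam, \<lambda>\<phi>. THE f. f \<in> ker_shift sc T lam \<and> G0 f = \<phi>)"

definition weyl_function :: "(complex \<Rightarrow> 'a \<Rightarrow> 'a) \<Rightarrow> ('a::ab_group_add, 'a) lop \<Rightarrow> ('a \<Rightarrow> 'b)
    \<Rightarrow> ('a \<Rightarrow> 'b) \<Rightarrow> complex \<Rightarrow> ('b, 'b) lop" where
  "weyl_function sc T G0 G1 lam = (fst (gamma_field sc T G0 lam), \<lambda>\<phi>. G1 (snd (gamma_field sc T G0 lam) \<phi>))"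

definition op_comp :: "('b, 'c) lop \<Rightarrow> ('a, 'b) lop \<Rightarrow> ('a, 'c) lop" where
  "op_comp B1 B2 = ({\<phi> \<in> fst B2. snd B2 \<phi> \<in> fst B1}, \<lambda>\<phi>. snd B1 (snd B2 \<phi>))"

definition ker_I_minus :: "('b::ab_group_add, 'b) lop \<Rightarrow> 'b set" where
  "ker_I_minus K = {\<phi> \<in> fst K. \<phi> - snd K \<phi> = 0}"

definition bc_ext :: "('a, 'a) lop \<Rightarrow> ('a \<Rightarrow> 'b) \<Rightarrow> ('a \<Rightarrow> 'b) \<Rightarrow> ('b, 'b) lop \<Rightarrow> ('b, 'b) lop \<Rightarrow> ('a, 'a) lop" where
  "bc_ext T G0 G1 B1 B2 =
     ({f \<in> fst T. G1 f \<in> fst (op_comp B1 B2) \<and> snd (op_comp B1 B2) (G1 f) = G0 f}, snd T)"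

end

theory Submission
  imports Defs
begin



lemma gen:
  fixes sc :: "complex \<Rightarrow> 'a::ab_group_add \<Rightarrow> 'a" and sc2 :: "complex \<Rightarrow> 'b::ab_group_add \<Rightarrow> 'b"
    and T :: "('a,'a) lop" and B1 B2 :: "('b,'b) lop"
  assumes vs: "vector_space sc"
    and T: "lin_op sc sc T" and G0: "linear_on sc sc2 (fst T) G0" and G1: "linear_on sc sc2 (fst T) G1"
    and B1: "lin_op sc2 sc2 B1" and B2: "lin_op sc2 sc2 B2"
    and lam: "lam \<in> resolvent_set sc ip (restrict_op T {f. G0 f = 0})"
  shows "(lam \<in> point_spectrum sc (bc_ext T G0 G1 B1 B2) \<longleftrightarrow>
               ker_I_minus (op_comp B2 (op_comp (weyl_function sc T G0 G1 lam) B1)) \<noteq> {0})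
          \<and> (lam \<in> point_spectrum sc (bc_ext T G0 G1 B1 B2) \<longrightarrow>
               ker_shift sc (bc_ext T G0 G1 B1 B2) lam =
                 {f \<in> ker_shift sc T lam. \<exists>\<phi> \<in> ker_I_minus (op_comp B2 (op_comp (weyl_function sc T G0 G1 lam) B1)).
                    G0 f = snd B1 \<phi>})"
proof -
  interpret vector_space sc by (rule vs)
  have additive0: "f 0 = 0" if "\<forall>x\<in>D. \<forall>y\<in>D. f (x + y) = f x + f y" "0 \<in> D" for f :: "'c::ab_group_add \<Rightarrow> 'd::ab_group_add" and D
  proof -
    have "f (0 + 0) = f 0 + f 0" using that by blast
    then show ?thesis by simp
  qed
  have Tsub: "is_subspace sc (fst T)" and Tadd: "\<forall>x\<in>fst T. \<forall>y\<in>fst T. snd T (x + y) = snd T x + snd T y"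
    using T unfolding lin_op_def linear_on_def by auto
  have T0: "0 \<in> fst T" "snd T 0 = 0" using Tsub Tadd additive0 unfolding is_subspace_def by auto
  have G0add: "\<forall>x\<in>fst T. \<forall>y\<in>fst T. G0 (x + y) = G0 x + G0 y" using G0 unfolding linear_on_def by auto
  have G1add: "\<forall>x\<in>fst T. \<forall>y\<in>fst T. G1 (x + y) = G1 x + G1 y" using G1 unfolding linear_on_def by auto
  have G00: "G0 0 = 0" using additive0[OF G0add] T0 by auto
  have G10: "G1 0 = 0" using additive0[OF G1add] T0 by auto
  have B1s: "0 \<in> fst B1" "snd B1 0 = 0" using B1 additive0 unfolding lin_op_def linear_on_def is_subspace_def by auto
  have B2s: "0 \<in> fst B2" "snd B2 0 = 0" using B2 additive0 unfolding lin_op_def linear_on_def is_subspace_def by auto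
  have neg: "- x \<in> fst T" "snd T (- x) = - snd T x" if "x \<in> fst T" for x
  proof -
    have "sc (-1) x \<in> fst T" using Tsub that unfolding is_subspace_def by blast
    then show n: "- x \<in> fst T" by simp
    have "snd T (x + - x) = snd T x + snd T (- x)" using Tadd that n by blast
    then have "snd T x + snd T (- x) = 0" using T0 by simp
    then show "snd T (- x) = - snd T x" by (metis minus_unique)
  qed
  have G0neg: "G0 (- x) = - G0 x" if "x \<in> fst T" for x
  proof -
    have "G0 (x + - x) = G0 x + G0 (- x)" using G0add that neg(1)[OF that] by blast
    then have "G0 x + G0 (- x) = 0" using G00 by simp
    then show ?thesis by (metis minus_unique)
  qed
  have bij: "inj_on (\<lambda>x. snd T x - sc lam x) (fst T \<inter> {f. G0 f = 0})"
    using lam unfolding resolvent_set_def restrict_op_def bij_betw_def by auto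
  have inj: "f = g" if f: "f \<in> ker_shift sc T lam" and g: "g \<in> ker_shift sc T lam" and e: "G0 f = G0 g" for f g
  proof -
    have fT: "f \<in> fst T" and gT: "g \<in> fst T" and fk: "snd T f - sc lam f = 0" and gk: "snd T g - sc lam g = 0"
      using f g unfolding ker_shift_def by auto
    have "f + - g \<in> fst T" using Tsub fT neg(1)[OF gT] unfolding is_subspace_def by blast
    then have dT: "f - g \<in> fst T" by (simp only: diff_conv_add_uminus)
    have "snd T (f + - g) = snd T f + snd T (- g)" using Tadd fT neg(1)[OF gT] by blast
    then have Td: "snd T (f - g) = snd T f - snd T g" using neg(2)[OF gT] by (simp only: diff_conv_add_uminus)
    have "G0 (f + - g) = G0 f + G0 (- g)" using G0add fT neg(1)[OF gT] by blast
    then have "G0 (f - g) = G0 f - G0 g" using G0neg[OF gT] by (simp only: diff_conv_add_uminus)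
    then have Gd: "G0 (f - g) = 0" using e by simp
    have "snd T (f - g) - sc lam (f - g) = 0" using Td fk gk by (simp add: scale_right_diff_distrib algebra_simps)
    moreover have "snd T 0 - sc lam 0 = 0" using T0 by simp
    ultimately have "snd T (f - g) - sc lam (f - g) = snd T 0 - sc lam 0" by simp
    moreover have "0 \<in> fst T \<inter> {f. G0 f = 0}" using T0 G00 by simp
    moreover have "f - g \<in> fst T \<inter> {f. G0 f = 0}" using dT Gd by simp
    ultimately have "f - g = 0" using bij unfolding inj_on_def by blast
    then show ?thesis by simp
  qed
  have gam: "snd (gamma_field sc T G0 lam) (G0 f) = f" if "f \<in> ker_shift sc T lam" for f
    unfolding gamma_field_def snd_conv
    by (rule the_equality) (use that inj in auto)
  have k0: "0 \<in> ker_shift sc T lam" using T0 unfolding ker_shift_def by simp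
  define K where "K = op_comp B2 (op_comp (weyl_function sc T G0 G1 lam) B1)"
  have Kmem: "\<phi> \<in> ker_I_minus K \<longleftrightarrow> (\<exists>f\<in>ker_shift sc T lam. \<phi> \<in> fst B1 \<and> snd B1 \<phi> = G0 f \<and> G1 f \<in> fst B2 \<and> snd B2 (G1 f) = \<phi>)" for \<phi>
  proof
    assume "\<phi> \<in> ker_I_minus K"
    then have a: "\<phi> \<in> fst B1" "snd B1 \<phi> \<in> G0 ` ker_shift sc T lam"
      and b: "G1 (snd (gamma_field sc T G0 lam) (snd B1 \<phi>)) \<in> fst B2"
      and c: "\<phi> = snd B2 (G1 (snd (gamma_field sc T G0 lam) (snd B1 \<phi>)))"
      unfolding K_def ker_I_minus_def op_comp_def weyl_function_def gamma_field_def by auto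
    then obtain f where f: "f \<in> ker_shift sc T lam" "snd B1 \<phi> = G0 f" by auto
    show "\<exists>f\<in>ker_shift sc T lam. \<phi> \<in> fst B1 \<and> snd B1 \<phi> = G0 f \<and> G1 f \<in> fst B2 \<and> snd B2 (G1 f) = \<phi>"
      using a b c f gam[OF f(1)] by auto
  next
    assume "\<exists>f\<in>ker_shift sc T lam. \<phi> \<in> fst B1 \<and> snd B1 \<phi> = G0 f \<and> G1 f \<in> fst B2 \<and> snd B2 (G1 f) = \<phi>"
    then obtain f where f: "f \<in> ker_shift sc T lam" "\<phi> \<in> fst B1" "snd B1 \<phi> = G0 f" "G1 f \<in> fst B2" "snd B2 (G1 f) = \<phi>" by blast
    then show "\<phi> \<in> ker_I_minus K"
      unfolding K_def ker_I_minus_def op_comp_def weyl_function_def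
      using gam[OF f(1)] by (auto simp: gamma_field_def)
  qed
  have ext: "f \<in> ker_shift sc (bc_ext T G0 G1 B1 B2) lam \<longleftrightarrow>
     f \<in> ker_shift sc T lam \<and> G1 f \<in> fst B2 \<and> snd B2 (G1 f) \<in> fst B1 \<and> snd B1 (snd B2 (G1 f)) = G0 f" for f
    unfolding ker_shift_def bc_ext_def op_comp_def by auto
  have ps: "lam \<in> point_spectrum sc A \<longleftrightarrow> (\<exists>f \<in> ker_shift sc A lam. f \<noteq> 0)" for A :: "('a,'a) lop"
    unfolding point_spectrum_def ker_shift_def by auto
  have K0: "0 \<in> ker_I_minus K" using Kmem k0 B1s B2s G00 G10 by auto
  have set_eq: "ker_shift sc (bc_ext T G0 G1 B1 B2) lam = {f \<in> ker_shift sc T lam. \<exists>\<phi> \<in> ker_I_minus K. G0 f = snd B1 \<phi>}"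
  proof (intro set_eqI iffI)
    fix f assume "f \<in> ker_shift sc (bc_ext T G0 G1 B1 B2) lam"
    then have h: "f \<in> ker_shift sc T lam" "G1 f \<in> fst B2" "snd B2 (G1 f) \<in> fst B1" "snd B1 (snd B2 (G1 f)) = G0 f"
      using ext by blast+
    then have "snd B2 (G1 f) \<in> ker_I_minus K" using Kmem by blast
    then show "f \<in> {f \<in> ker_shift sc T lam. \<exists>\<phi> \<in> ker_I_minus K. G0 f = snd B1 \<phi>}"
      using h by (metis (mono_tags, lifting) mem_Collect_eq)
  next
    fix f assume "f \<in> {f \<in> ker_shift sc T lam. \<exists>\<phi> \<in> ker_I_minus K. G0 f = snd B1 \<phi>}"
    then obtain \<phi> g where f: "f \<in> ker_shift sc T lam" "G0 f = snd B1 \<phi>" and g: "g\<in>ker_shift sc T lam" "\<phi> \<in> fst B1" "snd B1 \<phi> = G0 g" "G1 g \<in> fst B2" "snd B2 (G1 g) = \<phi>"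
      using Kmem by blast
    have "g = f" using inj f g by auto
    then show "f \<in> ker_shift sc (bc_ext T G0 G1 B1 B2) lam" using ext f g by auto
  qed
  have iff: "lam \<in> point_spectrum sc (bc_ext T G0 G1 B1 B2) \<longleftrightarrow> ker_I_minus K \<noteq> {0}"
  proof
    assume "lam \<in> point_spectrum sc (bc_ext T G0 G1 B1 B2)"
    then obtain f where f: "f \<in> ker_shift sc (bc_ext T G0 G1 B1 B2) lam" "f \<noteq> 0" using ps by blast
    then obtain \<phi> where \<phi>: "\<phi> \<in> ker_I_minus K" "G0 f = snd B1 \<phi>" using set_eq by blast
    have "\<phi> \<noteq> 0"
    proof
      assume "\<phi> = 0"
      then have "G0 f = G0 0" using \<phi> B1s G00 by simp
      then have "f = 0" using inj k0 f set_eq by blast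
      then show False using f by simp
    qed
    then show "ker_I_minus K \<noteq> {0}" using \<phi> by blast
  next
    assume "ker_I_minus K \<noteq> {0}"
    then obtain \<phi> where \<phi>: "\<phi> \<in> ker_I_minus K" "\<phi> \<noteq> 0" using K0 by blast
    then obtain f where f: "f\<in>ker_shift sc T lam" "\<phi> \<in> fst B1" "snd B1 \<phi> = G0 f" "G1 f \<in> fst B2" "snd B2 (G1 f) = \<phi>"
      using Kmem by blast
    have "G0 f = snd B1 \<phi>" using f by simp
    then have "\<exists>\<phi>\<in>ker_I_minus K. G0 f = snd B1 \<phi>" using \<phi>(1) by blast
    then have fin: "f \<in> ker_shift sc (bc_ext T G0 G1 B1 B2) lam" using set_eq f(1) by blast
    have "f \<noteq> 0" using f \<phi> G10 B2s by auto
    then show "lam \<in> point_spectrum sc (bc_ext T G0 G1 B1 B2)" using ps fin by blast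
  qed
  show ?thesis using iff set_eq unfolding K_def by blast
qed


theorem theorem4p2:
  fixes scH :: "complex \<Rightarrow> 'a::ab_group_add \<Rightarrow> 'a" and ipH :: "'a \<Rightarrow> 'a \<Rightarrow> complex"
    and scG :: "complex \<Rightarrow> 'b::ab_group_add \<Rightarrow> 'b" and ipG :: "'b \<Rightarrow> 'b \<Rightarrow> complex"
    and S St T Tt :: "('a, 'a) lop"
    and G0 G1 Gt0 Gt1 :: "'a \<Rightarrow> 'b"
    and B1 B2 Bt1 Bt2 :: "('b, 'b) lop"
  assumes "hilbert_space scH ipH" and "separable ipH"
    and "hilbert_space scG ipG"
    and "adjoint_pair scH ipH S St"
    and "lin_op scH scH T" and "core_of_adjoint ipH T S"
    and "lin_op scH scH Tt" and "core_of_adjoint ipH Tt St"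
    and "linear_on scH scG (fst T) G0" and "linear_on scH scG (fst T) G1"
    and "linear_on scH scG (fst Tt) Gt0" and "linear_on scH scG (fst Tt) Gt1"
    and "resolvent_set scH ipH (restrict_op T {f. G0 f = 0}) \<noteq> {}"
    and "resolvent_set scH ipH (restrict_op Tt {g. Gt0 g = 0}) \<noteq> {}"
    and "lin_op scG scG B1" and "lin_op scG scG B2"
    and "lin_op scG scG Bt1" and "lin_op scG scG Bt2"
  shows "(\<forall>lam\<in>resolvent_set scH ipH (restrict_op T {f. G0 f = 0}).
            (lam \<in> point_spectrum scH (bc_ext T G0 G1 B1 B2) \<longleftrightarrow>
               ker_I_minus (op_comp B2 (op_comp (weyl_function scH T G0 G1 lam) B1)) \<noteq> {0})
          \<and> (lam \<in> point_spectrum scH (bc_ext T G0 G1 B1 B2) \<longrightarrow>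
               ker_shift scH (bc_ext T G0 G1 B1 B2) lam =
                 {f \<in> ker_shift scH T lam. \<exists>\<phi> \<in> ker_I_minus (op_comp B2 (op_comp (weyl_function scH T G0 G1 lam) B1)).
                    G0 f = snd B1 \<phi>}))
       \<and> (\<forall>mu\<in>resolvent_set scH ipH (restrict_op Tt {g. Gt0 g = 0}).
            (mu \<in> point_spectrum scH (bc_ext Tt Gt0 Gt1 Bt1 Bt2) \<longleftrightarrow>
               ker_I_minus (op_comp Bt2 (op_comp (weyl_function scH Tt Gt0 Gt1 mu) Bt1)) \<noteq> {0})
          \<and> (mu \<in> point_spectrum scH (bc_ext Tt Gt0 Gt1 Bt1 Bt2) \<longrightarrow>
               ker_shift scH (bc_ext Tt Gt0 Gt1 Bt1 Bt2) mu =
                 {g \<in> ker_shift scH Tt mu. \<exists>\<psi> \<in> ker_I_minus (op_comp Bt2 (op_comp (weyl_function scH Tt Gt0 Gt1 mu) Bt1)).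
                    Gt0 g = snd Bt1 \<psi>}))"
  proof -
  have vH: "vector_space scH" using assms(1) unfolding hilbert_space_def complex_inner_space_def by simp
  show ?thesis
  proof (rule conjI; rule ballI)
    fix lam assume "lam \<in> resolvent_set scH ipH (restrict_op T {f. G0 f = 0})"
    then show "(lam \<in> point_spectrum scH (bc_ext T G0 G1 B1 B2) \<longleftrightarrow>
               ker_I_minus (op_comp B2 (op_comp (weyl_function scH T G0 G1 lam) B1)) \<noteq> {0})
          \<and> (lam \<in> point_spectrum scH (bc_ext T G0 G1 B1 B2) \<longrightarrow>
               ker_shift scH (bc_ext T G0 G1 B1 B2) lam =
                 {f \<in> ker_shift scH T lam. \<exists>\<phi> \<in> ker_I_minus (op_comp B2 (op_comp (weyl_function scH T G0 G1 lam) B1)).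
                    G0 f = snd B1 \<phi>})"
      by (rule gen[OF vH assms(5,9,10,15,16)])
  next
    fix mu assume "mu \<in> resolvent_set scH ipH (restrict_op Tt {g. Gt0 g = 0})"
    then show "(mu \<in> point_spectrum scH (bc_ext Tt Gt0 Gt1 Bt1 Bt2) \<longleftrightarrow>
               ker_I_minus (op_comp Bt2 (op_comp (weyl_function scH Tt Gt0 Gt1 mu) Bt1)) \<noteq> {0})
          \<and> (mu \<in> point_spectrum scH (bc_ext Tt Gt0 Gt1 Bt1 Bt2) \<longrightarrow>
               ker_shift scH (bc_ext Tt Gt0 Gt1 Bt1 Bt2) mu =
                 {g \<in> ker_shift scH Tt mu. \<exists>\<psi> \<in> ker_I_minus (op_comp Bt2 (op_comp (weyl_function scH Tt Gt0 Gt1 mu) Bt1)).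
                    Gt0 g = snd Bt1 \<psi>})"
      by (rule gen[OF vH assms(7,11,12,17,18)])
  qed
qed

end
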